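(* Let $\theta,\alpha\in(0,1)$ with $\theta$ irrational, and let $f(x)\in\mathbb Z[x]$ be a non-constant polynomial. Then the integer sequence $\boldsymbol u=\langle u_m\rangle_{m=0}^\infty$ given by $u_m:=f(\lfloor m\theta+\alpha\rfloor)$ satisfies Condition ( * ).
   Context: Condition ( * ): an integer sequence $\boldsymbol u=\langle u_m\rangle_{m\ge0}$ satisfies Condition ( * ) if there exist an integer $\sigma\ge 0$, integers $b_0,\ldots,b_\sigma$, and an unbounded sequence of positive integers $\langle r_n\rangle_{n\ge 0}$ such that, defining for each $n\in\mathbb N$ the sequence $w_{n,m}:=\sum_{i=0}^\sigma b_i u_{m+ir_n}$ ($m\ge 0$), the following hold: (1) Expanding gaps: for every $n$, the set $\Delta_n:=\{m\in\mathbb N: w_{n,m}\neq 0\}$ is infinite, and there is a constant $c>0$ (independent of $n$) such that the minimum distance $\mu_n$ between any two distinct elements of $\Delta_n$ satisfies $\mu_n\ge c\, r_n$ for all $n$. (2) Polynomial variation: there exist constants $c_0\ge 0$ and $C'>0$ (independent of $n,m,m'$) such that for all $n\in\mathbb N$ and all $m<m'$ in $\Delta_n$, $|w_{n,m'}|\le C'\big((m'-m)^{c_0}+|w_{n,m}|\big)$. *)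

theory Defs
  imports "HOL-Analysis.Analysis" "HOL-Computational_Algebra.Polynomial"
begin

definition wseq :: "(nat \<Rightarrow> int) \<Rightarrow> nat \<Rightarrow> (nat \<Rightarrow> int) \<Rightarrow> (nat \<Rightarrow> nat) \<Rightarrow> nat \<Rightarrow> nat \<Rightarrow> int" where
  "wseq u \<sigma> b r n m = (\<Sum>i = 0..\<sigma>. b i * u (m + i * r n))"

definition Delta :: "(nat \<Rightarrow> int) \<Rightarrow> nat \<Rightarrow> (nat \<Rightarrow> int) \<Rightarrow> (nat \<Rightarrow> nat) \<Rightarrow> nat \<Rightarrow> nat set" where
  "Delta u \<sigma> b r n = {m. wseq u \<sigma> b r n m \<noteq> 0}"

text \<open>Condition (*). The minimum distance mu_n between distinct elements of Delta_n
  is at least c r_n iff every pair of distinct elements has distance at least c r_n.\<close>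
definition condition_star :: "(nat \<Rightarrow> int) \<Rightarrow> bool" where
  "condition_star u \<longleftrightarrow>
    (\<exists>(\<sigma>::nat) (b::nat \<Rightarrow> int) (r::nat \<Rightarrow> nat).
       (\<forall>n. r n > 0) \<and> \<not> bdd_above (range r) \<and>
       (\<forall>n. infinite (Delta u \<sigma> b r n)) \<and>
       (\<exists>c::real. c > 0 \<and> (\<forall>n. \<forall>m\<in>Delta u \<sigma> b r n. \<forall>m'\<in>Delta u \<sigma> b r n.
            m \<noteq> m' \<longrightarrow> \<bar>real m - real m'\<bar> \<ge> c * real (r n))) \<and>
       (\<exists>(c0::real) (C'::real). c0 \<ge> 0 \<and> C' > 0 \<and>
          (\<forall>n. \<forall>m\<in>Delta u \<sigma> b r n. \<forall>m'\<in>Delta u \<sigma> b r n. m < m' \<longrightarrow>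
             real_of_int \<bar>wseq u \<sigma> b r n m'\<bar>
               \<le> C' * (real (m' - m) powr c0 + real_of_int \<bar>wseq u \<sigma> b r n m\<bar>))))"

end

theory Submission
  imports Defs "HOL-Analysis.Kronecker_Approximation_Theorem"
begin


fun bb :: "nat \<Rightarrow> nat \<Rightarrow> int" where
  "bb 0 i = (if i = 0 then 1 else 0)"
| "bb (Suc n) 0 = - bb n 0"
| "bb (Suc n) (Suc i) = bb n i - bb n (Suc i)"

lemma bb_closed: "bb n i = (-1)^(n-i) * int (n choose i)"
proof (induction n arbitrary: i)
  case 0 then show ?case by simp
next
  case (Suc n)
  show ?case
  proof (cases i)
    case 0 then show ?thesis using Suc by simp
  next
    case (Suc j)
    have "bb (Suc n) (Suc j) = (-1)^(n-j) * int (n choose j) - (-1)^(n - Suc j) * int (n choose Suc j)"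
      using Suc.IH by simp
    also have "\<dots> = (-1)^(n-j) * (int (n choose j) + int (n choose Suc j))"
    proof (cases "j < n")
      case True
      then have "n - j = Suc (n - Suc j)" by simp
      then show ?thesis by (simp add: algebra_simps)
    next
      case False
      then show ?thesis by simp
    qed
    also have "\<dots> = (-1)^(Suc n - Suc j) * int (Suc n choose Suc j)" by simp
    finally show ?thesis using Suc by simp
  qed
qed

lemma bb_zero: "n < i \<Longrightarrow> bb n i = 0"
  by (simp add: bb_closed)

lemma bb_nz: "i \<le> n \<Longrightarrow> bb n i \<noteq> 0"
  by (simp add: bb_closed)

lemma bb_shift:
  fixes h :: "nat \<Rightarrow> int"
  shows "(\<Sum>i=0..Suc n. bb (Suc n) i * h i) = (\<Sum>i=0..n. bb n i * (h (Suc i) - h i))"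
proof -
  have A: "(\<Sum>i=0..Suc n. bb (Suc n) i * h i) = - bb n 0 * h 0 + (\<Sum>i=0..n. (bb n i - bb n (Suc i)) * h (Suc i))"
    by (subst sum.atLeast0_atMost_Suc_shift) simp
  have B: "(\<Sum>i=0..Suc n. bb n i * h i) = bb n 0 * h 0 + (\<Sum>i=0..n. bb n (Suc i) * h (Suc i))"
    by (subst sum.atLeast0_atMost_Suc_shift) simp
  have C: "(\<Sum>i=0..Suc n. bb n i * h i) = (\<Sum>i=0..n. bb n i * h i)"
    by (simp add: bb_zero)
  have D: "(\<Sum>i=0..n. (bb n i - bb n (Suc i)) * h (Suc i)) = (\<Sum>i=0..n. bb n i * h (Suc i)) - (\<Sum>i=0..n. bb n (Suc i) * h (Suc i))"
    by (simp add: left_diff_distrib sum_subtractf)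
  have E: "(\<Sum>i=0..n. bb n i * (h (Suc i) - h i)) = (\<Sum>i=0..n. bb n i * h (Suc i)) - (\<Sum>i=0..n. bb n i * h i)"
    by (simp add: right_diff_distrib sum_subtractf)
  show ?thesis using A B C D E by linarith
qed

lemma degree_diff_shift:
  fixes g :: "int poly"
  assumes "degree g > 0"
  shows "degree (pcompose g [:1,1:] - g) < degree g"
proof -
  let ?q = "pcompose g [:1,1:] - g"
  have dg: "degree (pcompose g [:1,1:]) = degree g" by (simp add: degree_pcompose)
  have lc: "lead_coeff (pcompose g [:1,1:]) = lead_coeff g"
    by (subst lead_coeff_comp) simp_all
  have le: "degree ?q \<le> degree g" by (rule degree_diff_le) (simp_all add: dg)
  have c0: "coeff ?q (degree g) = 0" using lc dg by simp
  show ?thesis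
  proof (cases "?q = 0")
    case True then show ?thesis using assms by simp
  next
    case False
    then have "coeff ?q (degree ?q) \<noteq> 0" by (simp only: leading_coeff_0_iff) simp
    then have "degree ?q \<noteq> degree g" using c0 by metis
    then show ?thesis using le by simp
  qed
qed

lemma vanish:
  fixes g :: "int poly"
  assumes "degree g < n"
  shows "(\<Sum>i=0..n. bb n i * poly g (int i)) = 0"
  using assms
proof (induction n arbitrary: g)
  case 0 then show ?case by simp
next
  case (Suc n)
  let ?g = "pcompose g [:1,1:] - g"
  have "(\<Sum>i=0..Suc n. bb (Suc n) i * poly g (int i)) = (\<Sum>i=0..n. bb n i * (poly g (int (Suc i)) - poly g (int i)))"
    by (rule bb_shift)
  also have "\<dots> = (\<Sum>i=0..n. bb n i * poly ?g (int i))"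
  proof (intro sum.cong refl)
    fix i
    have "poly ?g (int i) = poly g (int (Suc i)) - poly g (int i)" by (simp add: poly_pcompose add.commute)
    then show "bb n i * (poly g (int (Suc i)) - poly g (int i)) = bb n i * poly ?g (int i)" by simp
  qed
  also have "\<dots> = 0"
  proof (cases "degree g = 0")
    case True
    then obtain c where "g = [:c:]" using degree_eq_zeroE by blast
    then have "?g = 0" by (simp add: pcompose_pCons)
    then show ?thesis by simp
  next
    case False
    then have "degree ?g < n" using degree_diff_shift[of g] Suc.prems by simp
    then show ?thesis by (rule Suc.IH)
  qed
  finally show ?case .
qed

lemma vanish2:
  fixes f :: "int poly" and x p :: int
  assumes "degree f < n"
  shows "(\<Sum>i=0..n. bb n i * poly f (x + int i * p)) = 0"
proof -
  let ?h = "pcompose f [:x, p:]"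
  have "degree ?h \<le> degree f"
    by (simp add: degree_pcompose)
  then have "(\<Sum>i=0..n. bb n i * poly ?h (int i)) = 0" using assms by (intro vanish) simp
  moreover have "poly ?h (int i) = poly f (x + int i * p)" for i
    by (simp add: poly_pcompose mult.commute)
  ultimately show ?thesis by simp
qed

lemma tail_sum: "j \<le> n \<Longrightarrow> (\<Sum>i=Suc j..Suc n. bb (Suc n) i) = bb n j"
proof -
  assume j: "j \<le> n"
  have "(\<Sum>i=Suc j..Suc n. bb (Suc n) i) = (\<Sum>i=j..n. bb (Suc n) (Suc i))"
    by (metis sum.shift_bounds_cl_Suc_ivl)
  also have "\<dots> = - (\<Sum>i=j..n. bb n (Suc i) - bb n i)" by (simp add: sum_negf[symmetric])
  also have "\<dots> = bb n j - bb n (Suc n)" using j by (subst sum_Suc_diff) auto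
  also have "\<dots> = bb n j" by (simp add: bb_zero)
  finally show ?thesis .
qed



definition nd :: "real \<Rightarrow> real" where "nd x = \<bar>x - of_int (round x)\<bar>"

lemma nd_le: "nd x \<le> \<bar>x - of_int z\<bar>"
  unfolding nd_def by (rule round_diff_minimal)

lemma nd_pos:
  assumes "\<theta> \<notin> \<rat>" "k \<ge> 1"
  shows "nd (real k * \<theta>) > 0"
proof (rule ccontr)
  assume "\<not> ?thesis"
  then have "real k * \<theta> = of_int (round (real k * \<theta>))" unfolding nd_def by simp
  then have "\<theta> = of_int (round (real k * \<theta>)) / real k" using assms(2) by (simp add: field_simps)
  then have "\<theta> \<in> \<rat>" by (metis Rats_divide Rats_of_int Rats_of_nat)
  then show False using assms by simp
qed

definition gQ :: "real \<Rightarrow> nat \<Rightarrow> real" where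
  "gQ \<theta> Q = Min ((\<lambda>k. nd (real k * \<theta>)) ` {1..Q})"

lemma gQ_le: "1 \<le> k \<Longrightarrow> k \<le> Q \<Longrightarrow> gQ \<theta> Q \<le> nd (real k * \<theta>)"
  unfolding gQ_def by (rule Min_le) auto

lemma gQ_attain: "1 \<le> Q \<Longrightarrow> \<exists>r. 1 \<le> r \<and> r \<le> Q \<and> gQ \<theta> Q = nd (real r * \<theta>)"
proof -
  assume "1 \<le> Q"
  then have "gQ \<theta> Q \<in> (\<lambda>k. nd (real k * \<theta>)) ` {1..Q}" unfolding gQ_def
    by (intro Min_in) auto
  then show ?thesis by auto
qed

lemma gQ_pos: "\<theta> \<notin> \<rat> \<Longrightarrow> 1 \<le> Q \<Longrightarrow> gQ \<theta> Q > 0"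
  using gQ_attain nd_pos by metis

lemma gQ_mono: "1 \<le> Q \<Longrightarrow> Q \<le> Q' \<Longrightarrow> gQ \<theta> Q' \<le> gQ \<theta> Q"
  using gQ_attain[of Q \<theta>] gQ_le[of _ Q' \<theta>] by fastforce

lemma gQ_dirichlet: "1 \<le> Q \<Longrightarrow> gQ \<theta> Q < 1 / real Q"
proof -
  assume Q: "1 \<le> Q"
  obtain h k where hk: "0 < k" "k \<le> int Q" "\<bar>of_int k * \<theta> - of_int h\<bar> < 1 / real Q"
  proof -
    have "Q > 0" using Q by simp
    from Dirichlet_approx[OF this, of \<theta>] show ?thesis using that by blast
  qed
  have "gQ \<theta> Q \<le> nd (real (nat k) * \<theta>)" using hk by (intro gQ_le) auto
  also have "\<dots> \<le> \<bar>of_int k * \<theta> - of_int h\<bar>" using nd_le hk(1) by simp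
  finally show ?thesis using hk by simp
qed

lemma gQ_drop:
  assumes irr: "\<theta> \<notin> \<rat>" and K: "K \<ge> 1" and Q0: "1 \<le> Q0"
  shows "\<exists>Q\<ge>Q0. real K * gQ \<theta> Q \<le> gQ \<theta> (Q div (K+1))"
proof (rule ccontr)
  assume "\<not> ?thesis"
  then have H: "\<And>Q. Q \<ge> Q0 \<Longrightarrow> gQ \<theta> (Q div (K+1)) < real K * gQ \<theta> Q" by force
  have I: "gQ \<theta> Q0 \<le> real K ^ j * gQ \<theta> (Q0 * (K+1)^j)" for j
  proof (induction j)
    case 0 then show ?case by simp
  next
    case (Suc j)
    have e0: "Q0 * (K+1)^(Suc j) = (Q0 * (K+1)^j) * (K+1)" by (simp add: algebra_simps)
    have e: "Q0 * (K+1)^(Suc j) div (K+1) = Q0 * (K+1)^j" unfolding e0 by (rule nonzero_mult_div_cancel_right) simp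
    have "(1::nat) \<le> (K+1)^(Suc j)" by (rule one_le_power) simp
    then have "Q0 * 1 \<le> Q0 * (K+1)^(Suc j)" by (rule mult_le_mono2)
    then have "Q0 * (K+1)^(Suc j) \<ge> Q0" by simp
    define G where "G = gQ \<theta> (Q0 * (K+1)^(Suc j))"
    have H1: "gQ \<theta> (Q0 * (K+1)^j) < real K * G"
      unfolding G_def using H[of "Q0 * (K+1)^(Suc j)"] e \<open>Q0 * (K+1)^(Suc j) \<ge> Q0\<close> by simp
    have "real K ^ j * gQ \<theta> (Q0 * (K+1)^j) \<le> real K ^ j * (real K * G)"
      using H1 by (intro mult_left_mono) auto
    moreover have "real K ^ j * (real K * G) = real K ^ Suc j * G" by (simp add: algebra_simps)
    ultimately have "gQ \<theta> Q0 \<le> real K ^ Suc j * G" using Suc.IH by linarith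
    then show ?case unfolding G_def .
  qed
  have g0: "gQ \<theta> Q0 > 0" using gQ_pos irr Q0 by blast
  obtain j where j: "(real K / real (K+1)) ^ j < gQ \<theta> Q0"
    using real_arch_pow_inv[OF g0, of "real K / real (K+1)"] K by auto
  have pos: "Q0 * (K+1)^j \<ge> 1" using Q0 by simp
  have "gQ \<theta> Q0 \<le> real K ^ j * gQ \<theta> (Q0 * (K+1)^j)" by (rule I)
  also have "\<dots> \<le> real K ^ j * (1 / real (Q0 * (K+1)^j))"
    using gQ_dirichlet[OF pos, of \<theta>] by (intro mult_left_mono) auto
  also have "\<dots> \<le> real K ^ j / real ((K+1)^j)"
    using Q0 by (simp add: divide_simps) (use mult_left_mono[of 1 "real Q0" "real K ^ j"] in simp)
  also have "\<dots> = (real K / real (K+1)) ^ j" by (simp add: power_divide)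
  finally show False using j by simp
qed

lemma select:
  assumes irr: "\<theta> \<notin> \<rat>" and K: "K \<ge> 1"
  shows "\<exists>r::nat. r > B \<and> real K * nd (real r * \<theta>) < 1 \<and>
     (\<forall>k::nat. 1 \<le> k \<longrightarrow> k * (K+1) < r \<longrightarrow> real K * nd (real r * \<theta>) \<le> nd (real k * \<theta>))"
proof -
  define B1 where "B1 = max B 1"
  have gB: "gQ \<theta> B1 > 0" using gQ_pos irr B1_def by simp
  define Q0 where "Q0 = nat \<lceil>1 / gQ \<theta> B1\<rceil> + K + 1"
  have Q01: "1 \<le> Q0" unfolding Q0_def by simp
  obtain Q where Q: "Q \<ge> Q0" "real K * gQ \<theta> Q \<le> gQ \<theta> (Q div (K+1))"
    using gQ_drop[OF irr K Q01] by blast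
  have Q1: "1 \<le> Q" using Q Q01 by simp
  obtain r where r: "1 \<le> r" "r \<le> Q" "gQ \<theta> Q = nd (real r * \<theta>)" using gQ_attain Q1 by blast
  have small: "gQ \<theta> Q < 1 / real Q" using gQ_dirichlet Q1 by blast
  have "1 / real Q \<le> 1 / real Q0" using Q Q01 by (simp add: frac_le)
  also have "\<dots> \<le> gQ \<theta> B1"
  proof -
    have "1 / gQ \<theta> B1 \<le> real Q0" unfolding Q0_def by linarith
    then show ?thesis using gB Q01 by (simp add: divide_simps mult.commute)
  qed
  finally have s1: "nd (real r * \<theta>) < gQ \<theta> B1" using small r by simp
  have rB: "r > B"
  proof (rule ccontr)
    assume "\<not> r > B"
    then have "r \<le> B1" unfolding B1_def by simp
    then have "gQ \<theta> B1 \<le> nd (real r * \<theta>)" using r by (intro gQ_le) auto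
    then show False using s1 by simp
  qed
  have "real K * nd (real r * \<theta>) < real K * (1 / real Q)"
    using small r K by (intro mult_strict_left_mono) auto
  also have "\<dots> \<le> 1" using Q unfolding Q0_def by (simp add: divide_simps)
  finally have c2: "real K * nd (real r * \<theta>) < 1" .
  have c3: "real K * nd (real r * \<theta>) \<le> nd (real k * \<theta>)" if k: "1 \<le> k" "k * (K+1) < r" for k
  proof -
    have "k * (K+1) \<le> Q" using k r by simp
    then have kq: "k \<le> Q div (K+1)" by (simp add: less_eq_div_iff_mult_less_eq)
    have "real K * nd (real r * \<theta>) \<le> gQ \<theta> (Q div (K+1))" using Q r by simp
    also have "\<dots> \<le> nd (real k * \<theta>)" using k kq by (intro gQ_le) auto
    finally show ?thesis .
  qed
  show ?thesis using rB c2 c3 by blast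
qed



definition PF :: "int poly \<Rightarrow> real \<Rightarrow> real" where
  "PF F z = (\<Sum>i\<le>degree F. real_of_int (coeff F i) * z^i)"

lemma PF_poly: "real_of_int (poly F z) = PF F (of_int z)"
  by (simp add: PF_def poly_altdef)

lemma pow_le_pow1: "0 \<le> (z::real) \<Longrightarrow> i \<le> k \<Longrightarrow> z^i \<le> (z+1)^k"
proof -
  assume z: "0 \<le> z" and ik: "i \<le> k"
  have "z^i \<le> (z+1)^i" using z by (intro power_mono) auto
  also have "\<dots> \<le> (z+1)^k" using z ik by (intro power_increasing) auto
  finally show ?thesis .
qed

lemma PF_bound:
  assumes "0 \<le> z"
  shows "\<bar>PF F z\<bar> \<le> (\<Sum>i\<le>degree F. \<bar>real_of_int (coeff F i)\<bar>) * (z+1)^degree F"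
proof -
  have "\<bar>PF F z\<bar> \<le> (\<Sum>i\<le>degree F. \<bar>real_of_int (coeff F i) * z^i\<bar>)"
    unfolding PF_def by (rule sum_abs)
  also have "\<dots> \<le> (\<Sum>i\<le>degree F. \<bar>real_of_int (coeff F i)\<bar> * (z+1)^degree F)"
    using assms by (intro sum_mono) (auto simp: abs_mult intro!: mult_left_mono pow_le_pow1)
  also have "\<dots> = (\<Sum>i\<le>degree F. \<bar>real_of_int (coeff F i)\<bar>) * (z+1)^degree F"
    by (simp add: sum_distrib_right)
  finally show ?thesis .
qed

lemma PF_rem:
  assumes "0 \<le> z"
  shows "\<bar>PF F z - real_of_int (lead_coeff F) * z^degree F\<bar>
     \<le> (\<Sum>i<degree F. \<bar>real_of_int (coeff F i)\<bar>) * (z+1)^(degree F - 1)"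
proof -
  let ?k = "degree F"
  have "PF F z = (\<Sum>i<Suc ?k. real_of_int (coeff F i) * z^i)"
    by (simp add: PF_def lessThan_Suc_atMost)
  also have "\<dots> = (\<Sum>i<?k. real_of_int (coeff F i) * z^i) + real_of_int (lead_coeff F) * z^?k"
    by simp
  finally have e: "PF F z - real_of_int (lead_coeff F) * z^?k = (\<Sum>i<?k. real_of_int (coeff F i) * z^i)"
    by simp
  have "\<bar>\<Sum>i<?k. real_of_int (coeff F i) * z^i\<bar> \<le> (\<Sum>i<?k. \<bar>real_of_int (coeff F i) * z^i\<bar>)"
    by (rule sum_abs)
  also have "\<dots> \<le> (\<Sum>i<?k. \<bar>real_of_int (coeff F i)\<bar> * (z+1)^(?k - 1))"
    using assms by (intro sum_mono) (auto simp: abs_mult intro!: mult_left_mono pow_le_pow1)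
  also have "\<dots> = (\<Sum>i<?k. \<bar>real_of_int (coeff F i)\<bar>) * (z+1)^(?k - 1)"
    by (simp add: sum_distrib_right)
  finally show ?thesis using e by simp
qed

lemma pow_diff:
  fixes y h :: real
  assumes "0 \<le> y" "0 \<le> h"
  shows "(y+h)^Suc k - y^Suc k \<le> real (Suc k) * h * (y+h)^k"
proof (induction k)
  case 0 then show ?case by simp
next
  case (Suc k)
  have "(y+h)^Suc (Suc k) - y^Suc (Suc k) = (y+h) * ((y+h)^Suc k - y^Suc k) + h * y^Suc k"
    by (simp add: algebra_simps)
  also have "\<dots> \<le> (y+h) * (real (Suc k) * h * (y+h)^k) + h * (y+h)^Suc k"
    using assms Suc.IH by (intro add_mono mult_left_mono power_mono) auto
  also have "\<dots> = real (Suc (Suc k)) * h * (y+h)^Suc k"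
    by (simp add: algebra_simps)
  finally show ?case .
qed

lemma pow_diff_nonneg:
  fixes y h :: real
  assumes "0 \<le> y" "0 \<le> h"
  shows "y^k \<le> (y+h)^k"
  using assms by (intro power_mono) auto

lemma pow_add_le: "0 \<le> (u::real) \<Longrightarrow> 0 \<le> v \<Longrightarrow> (u+v)^k \<le> 2^k * (u^k + v^k)"
proof -
  assume u: "0 \<le> u" and v: "0 \<le> v"
  have "(u+v)^k \<le> (2 * max u v)^k" using u v by (intro power_mono) auto
  also have "\<dots> = 2^k * (max u v)^k" by (simp add: power_mult_distrib)
  also have "(max u v)^k \<le> u^k + v^k" using u v by (cases "u \<le> v") (auto simp: max_def)
  then have "2^k * (max u v)^k \<le> 2^k * (u^k + v^k)" by (intro mult_left_mono) auto
  finally show ?thesis .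
qed



definition WW :: "(nat \<Rightarrow> int) \<Rightarrow> nat \<Rightarrow> int poly \<Rightarrow> nat \<Rightarrow> real \<Rightarrow> real \<Rightarrow> real" where
  "WW b n0 F j x p = (\<Sum>i=j..n0. real_of_int (b i) * PF F (x + real i * p))"

lemma WW_upper:
  assumes x: "0 \<le> x" and p: "0 \<le> p"
  shows "\<bar>WW b n0 F j x p\<bar> \<le> (\<Sum>i=0..n0. \<bar>real_of_int (b i)\<bar>) * (\<Sum>i\<le>degree F. \<bar>real_of_int (coeff F i)\<bar>)
            * (x + real n0 * p + 1)^degree F"
proof -
  let ?CF = "(\<Sum>i\<le>degree F. \<bar>real_of_int (coeff F i)\<bar>)"
  let ?Z = "x + real n0 * p + 1"
  have CF: "0 \<le> ?CF" by (intro sum_nonneg) auto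
  have "\<bar>WW b n0 F j x p\<bar> \<le> (\<Sum>i=j..n0. \<bar>real_of_int (b i) * PF F (x + real i * p)\<bar>)"
    unfolding WW_def by (rule sum_abs)
  also have "\<dots> \<le> (\<Sum>i=j..n0. \<bar>real_of_int (b i)\<bar> * (?CF * ?Z^degree F))"
  proof (intro sum_mono)
    fix i assume i: "i \<in> {j..n0}"
    have ip: "real i * p \<le> real n0 * p" using i p by (intro mult_right_mono) auto
    have "\<bar>PF F (x + real i * p)\<bar> \<le> ?CF * (x + real i * p + 1)^degree F"
      using x p by (intro PF_bound) auto
    also have "\<dots> \<le> ?CF * ?Z^degree F"
      using CF x p ip by (intro mult_left_mono power_mono) auto
    finally show "\<bar>real_of_int (b i) * PF F (x + real i * p)\<bar> \<le> \<bar>real_of_int (b i)\<bar> * (?CF * ?Z^degree F)"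
      by (simp add: abs_mult mult_left_mono)
  qed
  also have "\<dots> \<le> (\<Sum>i=0..n0. \<bar>real_of_int (b i)\<bar> * (?CF * ?Z^degree F))"
    using CF x p by (intro sum_mono2) auto
  also have "\<dots> = (\<Sum>i=0..n0. \<bar>real_of_int (b i)\<bar>) * ?CF * ?Z^degree F"
    by (simp add: sum_distrib_right mult.assoc)
  finally show ?thesis .
qed

lemma term_bound:
  assumes x: "0 \<le> x" and p: "0 \<le> p" and i: "i \<le> n0" and k: "degree F = Suc k'"
  shows "\<bar>PF F (x + real i * p) - real_of_int (lead_coeff F) * x^degree F\<bar>
     \<le> ((\<Sum>i<degree F. \<bar>real_of_int (coeff F i)\<bar>) + \<bar>real_of_int (lead_coeff F)\<bar> * real (Suc k') * real n0)
        * (p+1) * (x + real n0 * p + 1)^k'"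
proof -
  let ?CR = "(\<Sum>i<degree F. \<bar>real_of_int (coeff F i)\<bar>)"
  let ?a = "real_of_int (lead_coeff F)"
  let ?z = "x + real i * p"
  let ?Z = "x + real n0 * p + 1"
  have CR: "0 \<le> ?CR" by (intro sum_nonneg) auto
  have ip0: "0 \<le> real i * p" using p by simp
  have ip: "real i * p \<le> real n0 * p" using i p by (intro mult_right_mono) auto
  have ip1: "real i * p \<le> real n0 * (p+1)" using ip p by (simp add: algebra_simps)
  have zZ: "?z + 1 \<le> ?Z" using ip by simp
  have Z0: "0 \<le> ?Z" using x p by simp
  have Zk: "0 \<le> ?Z^k'" using Z0 by simp
  have r1: "\<bar>PF F ?z - ?a * ?z^degree F\<bar> \<le> ?CR * (?z+1)^k'"
    using PF_rem[of ?z F] x ip0 k by simp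
  have r2: "?CR * (?z+1)^k' \<le> ?CR * (p+1) * ?Z^k'"
  proof -
    have "?CR * (?z+1)^k' \<le> ?CR * ?Z^k'" using CR zZ x ip0 by (intro mult_left_mono power_mono) auto
    also have "\<dots> \<le> ?CR * ((p+1) * ?Z^k')"
    proof -
      have "?Z^k' \<le> (p+1) * ?Z^k'" using mult_right_mono[of 1 "p+1" "?Z^k'"] Zk p by simp
      then show ?thesis using CR by (intro mult_left_mono) auto
    qed
    finally show ?thesis by (simp add: mult.assoc)
  qed
  have d0: "0 \<le> ?z^Suc k' - x^Suc k'" using pow_diff_nonneg[OF x ip0, of "Suc k'"] by linarith
  have d1: "?z^Suc k' - x^Suc k' \<le> real (Suc k') * (real i * p) * ?z^k'"
    using pow_diff[of x "real i * p" k'] x ip0 by simp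
  have d2: "real (Suc k') * (real i * p) * ?z^k' \<le> real (Suc k') * (real n0 * (p+1)) * ?Z^k'"
    using ip1 ip0 x zZ i p by (intro mult_mono power_mono) auto
  have r3: "\<bar>?a * ?z^degree F - ?a * x^degree F\<bar> \<le> \<bar>?a\<bar> * real (Suc k') * real n0 * (p+1) * ?Z^k'"
  proof -
    have "\<bar>?a * ?z^degree F - ?a * x^degree F\<bar> = \<bar>?a\<bar> * (?z^Suc k' - x^Suc k')"
      using d0 k by (simp add: abs_mult right_diff_distrib[symmetric])
    also have "\<dots> \<le> \<bar>?a\<bar> * (real (Suc k') * (real n0 * (p+1)) * ?Z^k')"
    proof -
      have "?z^Suc k' - x^Suc k' \<le> real (Suc k') * (real n0 * (p+1)) * ?Z^k'" using d1 d2 by (rule order_trans)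
      then show ?thesis by (intro mult_left_mono) auto
    qed
    finally show ?thesis by (simp add: mult.assoc)
  qed
  have "\<bar>PF F ?z - ?a * x^degree F\<bar> \<le> \<bar>PF F ?z - ?a * ?z^degree F\<bar> + \<bar>?a * ?z^degree F - ?a * x^degree F\<bar>"
    by linarith
  also have "\<dots> \<le> ?CR * (p+1) * ?Z^k' + \<bar>?a\<bar> * real (Suc k') * real n0 * (p+1) * ?Z^k'"
    using r1 r2 r3 by linarith
  also have "\<dots> = (?CR + \<bar>?a\<bar> * real (Suc k') * real n0) * (p+1) * ?Z^k'"
    by (simp add: algebra_simps)
  finally show ?thesis .
qed



lemma WW_split:
  "WW b n0 F j x p - real_of_int (lead_coeff F) * real_of_int (\<Sum>i=j..n0. b i) * x^degree F
    = (\<Sum>i=j..n0. real_of_int (b i) * (PF F (x + real i * p) - real_of_int (lead_coeff F) * x^degree F))"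
  unfolding WW_def by (simp add: sum_subtractf sum_distrib_right sum_distrib_left algebra_simps)

lemma WW_lower:
  assumes F: "F \<noteq> 0" and beta: "\<forall>j\<in>{1..n0}. (\<Sum>i=j..n0. b i) \<noteq> 0"
  shows "\<exists>A\<ge>0. \<forall>j\<in>{1..n0}. \<forall>x p. 0 \<le> x \<longrightarrow> 0 \<le> p \<longrightarrow>
           x^degree F \<le> 2 * \<bar>WW b n0 F j x p\<bar> + A * (p+1)^degree F"
proof -
  let ?a = "real_of_int (lead_coeff F)"
  have aB: "1 \<le> \<bar>?a * real_of_int (\<Sum>i=j..n0. b i)\<bar>" if j: "j \<in> {1..n0}" for j
  proof -
    have "lead_coeff F * (\<Sum>i=j..n0. b i) \<noteq> 0" using F beta j by simp
    then have "1 \<le> \<bar>lead_coeff F * (\<Sum>i=j..n0. b i)\<bar>" by linarith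
    then show ?thesis by (metis of_int_1_le_iff of_int_abs of_int_mult)
  qed
  show ?thesis
  proof (cases "degree F")
    case 0
    have WWc: "WW b n0 F j x p = ?a * real_of_int (\<Sum>i=j..n0. b i)" for j x p
      unfolding WW_def PF_def using 0 by (simp add: sum_distrib_left mult_ac)
    show ?thesis
    proof (intro exI[of _ 0] conjI ballI allI impI)
      fix j x p assume j: "j \<in> {1..n0}"
      show "x^degree F \<le> 2 * \<bar>WW b n0 F j x p\<bar> + 0 * (p+1)^degree F"
        using aB[OF j] 0 WWc[of j x p] by simp
    qed simp
  next
    case (Suc k')
    let ?k = "degree F"
    let ?CR = "(\<Sum>i<degree F. \<bar>real_of_int (coeff F i)\<bar>)"
    let ?Bs = "(\<Sum>i=0..n0. \<bar>real_of_int (b i)\<bar>)"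
    define Ce where "Ce = ?Bs * (?CR + \<bar>?a\<bar> * real (Suc k') * real n0)"
    define A0 where "A0 = real n0 + Ce * 2^Suc k' + 1"
    have Bs0: "0 \<le> ?Bs" by (intro sum_nonneg) auto
    have CR0: "0 \<le> ?CR" by (intro sum_nonneg) auto
    have Ce0: "0 \<le> Ce" unfolding Ce_def using Bs0 CR0 by simp
    have A01: "1 \<le> A0" unfolding A0_def using Ce0 by simp
    show ?thesis
    proof (intro exI[of _ "A0 ^ ?k"] conjI ballI allI impI)
      show "0 \<le> A0 ^ ?k" using A01 by simp
    next
      fix j :: nat and x p :: real
      assume j: "j \<in> {1..n0}" and x: "0 \<le> x" and p: "0 \<le> p"
      let ?Z = "x + real n0 * p + 1"
      let ?T = "(?CR + \<bar>?a\<bar> * real (Suc k') * real n0) * (p+1) * ?Z^k'"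
      have T0: "0 \<le> ?T" using CR0 x p by simp
      have E: "\<bar>WW b n0 F j x p - ?a * real_of_int (\<Sum>i=j..n0. b i) * x^?k\<bar> \<le> Ce * (p+1) * ?Z^k'"
      proof -
        have "\<bar>WW b n0 F j x p - ?a * real_of_int (\<Sum>i=j..n0. b i) * x^?k\<bar>
            \<le> (\<Sum>i=j..n0. \<bar>real_of_int (b i) * (PF F (x + real i * p) - ?a * x^?k)\<bar>)"
          unfolding WW_split by (rule sum_abs)
        also have "\<dots> \<le> (\<Sum>i=j..n0. \<bar>real_of_int (b i)\<bar> * ?T)"
        proof (intro sum_mono)
          fix i assume i: "i \<in> {j..n0}"
          have "\<bar>PF F (x + real i * p) - ?a * x^?k\<bar> \<le> ?T"
            using term_bound[OF x p _ Suc, of i n0] i by simp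
          then show "\<bar>real_of_int (b i) * (PF F (x + real i * p) - ?a * x^?k)\<bar> \<le> \<bar>real_of_int (b i)\<bar> * ?T"
            by (simp add: abs_mult mult_left_mono)
        qed
        also have "\<dots> \<le> (\<Sum>i=0..n0. \<bar>real_of_int (b i)\<bar> * ?T)"
          using T0 by (intro sum_mono2) auto
        also have "\<dots> = Ce * (p+1) * ?Z^k'"
          unfolding Ce_def by (simp add: sum_distrib_right mult.assoc)
        finally show ?thesis .
      qed
      show "x^?k \<le> 2 * \<bar>WW b n0 F j x p\<bar> + A0 ^ ?k * (p+1)^?k"
      proof (cases "A0 * (p+1) \<le> x")
        case True
        have "(real n0 + 1) * (p+1) \<le> A0 * (p+1)" using p Ce0 unfolding A0_def
          by (intro mult_right_mono) auto
        then have nZ: "real n0 * p + 1 \<le> x" using True p by (simp add: algebra_simps)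
        have Zx: "?Z^k' \<le> (2*x)^k'" using nZ x p by (intro power_mono) auto
        have "A0 * (Ce * (p+1) * ?Z^k') \<le> A0 * (Ce * (p+1) * (2*x)^k')"
          using Zx Ce0 p A01 by (intro mult_left_mono) auto
        also have "\<dots> = Ce * 2^k' * x^k' * (A0 * (p+1))" by (simp add: power_mult_distrib algebra_simps)
        also have "\<dots> \<le> Ce * 2^k' * x^k' * x" using True Ce0 x by (intro mult_left_mono) auto
        also have "\<dots> = (Ce * 2^Suc k') * x^?k / 2" using Suc by (simp add: algebra_simps)
        also have "\<dots> \<le> A0 * x^?k / 2" unfolding A0_def using x by (intro divide_right_mono mult_right_mono) auto
        finally have "A0 * (Ce * (p+1) * ?Z^k') \<le> A0 * (x^?k / 2)" by simp
        then have Eb: "Ce * (p+1) * ?Z^k' \<le> x^?k / 2" using A01 by simp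
        have X0: "0 \<le> x^?k" using x by simp
        have "x^?k \<le> \<bar>?a * real_of_int (\<Sum>i=j..n0. b i)\<bar> * x^?k"
          using aB[OF j] X0 mult_right_mono by fastforce
        also have "\<dots> = \<bar>?a * real_of_int (\<Sum>i=j..n0. b i) * x^?k\<bar>" using X0 by (simp add: abs_mult)
        finally have "x^?k \<le> \<bar>?a * real_of_int (\<Sum>i=j..n0. b i) * x^?k\<bar>" .
        then have "x^?k \<le> \<bar>WW b n0 F j x p\<bar> + x^?k / 2" using E Eb by linarith
        moreover have "0 \<le> A0 ^ ?k * (p+1)^?k" using A01 p by simp
        ultimately show ?thesis by linarith
      next
        case False
        then have "x^?k \<le> (A0 * (p+1))^?k" using x by (intro power_mono) auto
        then show ?thesis by (simp add: power_mult_distrib)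
      qed
    qed
  qed
qed



lemma KEY:
  assumes F: "F \<noteq> 0" and beta: "\<forall>j\<in>{1..n0}. (\<Sum>i=j..n0. b i) \<noteq> 0" and E: "0 \<le> E"
  shows "\<exists>C>0. \<forall>j\<in>{1..n0}. \<forall>j'\<in>{1..n0}. \<forall>x x' p D. 0 \<le> x \<longrightarrow> x \<le> x' \<longrightarrow> x' \<le> x + E*D \<longrightarrow>
           0 \<le> p \<longrightarrow> p \<le> E*D \<longrightarrow> 1 \<le> D \<longrightarrow>
           \<bar>WW b n0 F j' x' p\<bar> \<le> C * (D^degree F + \<bar>WW b n0 F j x p\<bar>)"
proof -
  obtain A where A0: "A \<ge> 0" and A: "\<forall>j\<in>{1..n0}. \<forall>x p. 0 \<le> x \<longrightarrow> 0 \<le> p \<longrightarrow>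
           x^degree F \<le> 2 * \<bar>WW b n0 F j x p\<bar> + A * (p+1)^degree F"
    using WW_lower[OF F beta] by blast
  let ?k = "degree F"
  define Cu where "Cu = (\<Sum>i=0..n0. \<bar>real_of_int (b i)\<bar>) * (\<Sum>i\<le>degree F. \<bar>real_of_int (coeff F i)\<bar>)"
  have Cu0: "0 \<le> Cu" unfolding Cu_def by (intro mult_nonneg_nonneg sum_nonneg) auto
  define G where "G = E + real n0 * E + 1"
  have G0: "0 \<le> G" unfolding G_def using E by simp
  define C where "C = Cu * 2^?k * (2 + A * (E+1)^?k + G^?k) + 1"
  have "0 \<le> Cu * 2^?k * (2 + A * (E+1)^?k + G^?k)"
    using Cu0 A0 E G0 by (intro mult_nonneg_nonneg add_nonneg_nonneg) auto
  then have C0: "C > 0" unfolding C_def by linarith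
  show ?thesis
  proof (intro exI[of _ C] conjI ballI allI impI C0)
    fix j j' x x' p D
    assume j: "j \<in> {1..n0}" and j': "j' \<in> {1..n0}" and x: "0 \<le> x" and xx: "x \<le> x'"
      and xD: "x' \<le> x + E*D" and p: "0 \<le> p" and pD: "p \<le> E*D" and D: "1 \<le> D"
    let ?W = "\<bar>WW b n0 F j x p\<bar>"
    have u1: "\<bar>WW b n0 F j' x' p\<bar> \<le> Cu * (x' + real n0 * p + 1)^?k"
      using WW_upper[of x' p b n0 F j'] x xx p unfolding Cu_def by simp
    have "real n0 * p \<le> real n0 * (E * D)" using pD by (intro mult_left_mono) auto
    then have "x' + real n0 * p + 1 \<le> x + G * D" using xD D unfolding G_def by (simp add: algebra_simps)
    then have "(x' + real n0 * p + 1)^?k \<le> (x + G*D)^?k" using x xx p by (intro power_mono) auto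
    also have "\<dots> \<le> 2^?k * (x^?k + (G*D)^?k)" using x G0 D by (intro pow_add_le) auto
    finally have u2: "\<bar>WW b n0 F j' x' p\<bar> \<le> Cu * 2^?k * (x^?k + G^?k * D^?k)"
      using u1 Cu0 by (simp add: power_mult_distrib mult.assoc) (meson mult_left_mono order_trans)
    have "p + 1 \<le> (E+1) * D" using pD D by (simp add: algebra_simps)
    then have "(p+1)^?k \<le> ((E+1)*D)^?k" using p by (intro power_mono) auto
    then have "A * (p+1)^?k \<le> A * (E+1)^?k * D^?k" using A0 by (simp add: power_mult_distrib mult.assoc mult_left_mono)
    moreover have "x^?k \<le> 2 * ?W + A * (p+1)^?k" using A j x p by blast
    ultimately have l: "x^?k \<le> 2 * ?W + A * (E+1)^?k * D^?k" by linarith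
    have Dk: "1 \<le> D^?k" using D by simp
    have "x^?k + G^?k * D^?k \<le> (2 + A * (E+1)^?k + G^?k) * (D^?k + ?W)"
    proof -
      have "x^?k + G^?k * D^?k \<le> 2 * ?W + A * (E+1)^?k * D^?k + G^?k * D^?k" using l by linarith
      also have "\<dots> \<le> (2 + A * (E+1)^?k + G^?k) * (D^?k + ?W)"
        using Dk A0 E G0 by (simp add: algebra_simps add_increasing mult_nonneg_nonneg)
      finally show ?thesis .
    qed
    then have "Cu * 2^?k * (x^?k + G^?k * D^?k) \<le> Cu * 2^?k * ((2 + A * (E+1)^?k + G^?k) * (D^?k + ?W))"
      using Cu0 by (intro mult_left_mono) auto
    also have "\<dots> \<le> C * (D^?k + ?W)" unfolding C_def using Dk by (simp add: algebra_simps add_increasing)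
    finally show "\<bar>WW b n0 F j' x' p\<bar> \<le> C * (D^?k + ?W)" using u2 by linarith
  qed
qed



lemma pattern0:
  fixes t \<epsilon> :: real
  assumes t: "0 \<le> t" "t < 1" and z: "\<lfloor>t + real n0 * \<epsilon>\<rfloor> = 0" and i: "i \<le> n0"
  shows "\<lfloor>t + real i * \<epsilon>\<rfloor> = 0"
proof -
  have z': "0 \<le> t + real n0 * \<epsilon>" "t + real n0 * \<epsilon> < 1" using z by linarith+
  show ?thesis
  proof (cases "\<epsilon> \<ge> 0")
    case True
    then have "real i * \<epsilon> \<le> real n0 * \<epsilon>" "0 \<le> real i * \<epsilon>" using i by (auto intro: mult_right_mono)
    then show ?thesis using t z' by (intro floor_unique) auto
  next
    case False
    then have "real n0 * \<epsilon> \<le> real i * \<epsilon>" "real i * \<epsilon> \<le> 0" using i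
      by (auto intro: mult_right_mono_neg simp: mult_nonneg_nonpos)
    then show ?thesis using t z' by (intro floor_unique) auto
  qed
qed

lemma pattern:
  fixes t \<epsilon> :: real
  assumes t: "0 \<le> t" "t < 1" and e: "\<epsilon> \<noteq> 0" "real n0 * \<bar>\<epsilon>\<bar> < 1"
    and nz: "\<lfloor>t + real n0 * \<epsilon>\<rfloor> \<noteq> 0"
  shows "\<exists>j\<in>{1..n0}. \<forall>i\<le>n0. \<lfloor>t + real i * \<epsilon>\<rfloor> = (if j \<le> i then (if \<epsilon> > 0 then 1 else -1) else 0)"
proof -
  define j where "j = (LEAST i. \<lfloor>t + real i * \<epsilon>\<rfloor> \<noteq> 0)"
  have jn: "j \<le> n0" unfolding j_def using nz by (rule Least_le)
  have jz: "\<lfloor>t + real j * \<epsilon>\<rfloor> \<noteq> 0" unfolding j_def using nz by (rule LeastI)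
  have j1: "j \<ge> 1" using jz t by (cases j) (auto intro: floor_unique)
  have below: "\<lfloor>t + real i * \<epsilon>\<rfloor> = 0" if "i < j" for i
    using that not_less_Least unfolding j_def by blast
  have above: "\<lfloor>t + real i * \<epsilon>\<rfloor> = (if \<epsilon> > 0 then 1 else -1)" if "j \<le> i" "i \<le> n0" for i
  proof (cases "\<epsilon> > 0")
    case True
    have "0 \<le> real j * \<epsilon>" using True by simp
    then have "1 \<le> t + real j * \<epsilon>" using jz t by linarith
    moreover have "real j * \<epsilon> \<le> real i * \<epsilon>" "real i * \<epsilon> \<le> real n0 * \<epsilon>"
      using that True by (auto intro: mult_right_mono)
    moreover have "real n0 * \<epsilon> < 1" using e True by simp
    ultimately have "1 \<le> t + real i * \<epsilon>" "t + real i * \<epsilon> < 2" using t by linarith+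
    then have "\<lfloor>t + real i * \<epsilon>\<rfloor> = 1" by (intro floor_unique) auto
    then show ?thesis using True by simp
  next
    case False
    then have en: "\<epsilon> < 0" using e by simp
    have "real j * \<epsilon> \<le> 0" using en by (simp add: mult_nonneg_nonpos)
    then have "t + real j * \<epsilon> < 0" using jz t by linarith
    moreover have "real i * \<epsilon> \<le> real j * \<epsilon>" "real n0 * \<epsilon> \<le> real i * \<epsilon>"
      using that en by (auto intro: mult_right_mono_neg)
    moreover have "- 1 < real n0 * \<epsilon>" using e en by simp
    ultimately have "t + real i * \<epsilon> < 0" "-1 \<le> t + real i * \<epsilon>" using t by linarith+
    then have "\<lfloor>t + real i * \<epsilon>\<rfloor> = -1" by (intro floor_unique) auto
    then show ?thesis using False by simp
  qed
  show ?thesis using jn j1 below above by (intro bexI[of _ j]) auto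
qed

lemma floor_shift:
  fixes \<theta> \<alpha> :: real and r m i :: nat
  defines "p \<equiv> round (real r * \<theta>)"
  defines "\<epsilon> \<equiv> real r * \<theta> - of_int p"
  shows "\<lfloor>real (m + i * r) * \<theta> + \<alpha>\<rfloor> = \<lfloor>real m * \<theta> + \<alpha>\<rfloor> + int i * p + \<lfloor>frac (real m * \<theta> + \<alpha>) + real i * \<epsilon>\<rfloor>"
proof -
  have eq: "real (m + i * r) * \<theta> + \<alpha> = (frac (real m * \<theta> + \<alpha>) + real i * \<epsilon>) + of_int (\<lfloor>real m * \<theta> + \<alpha>\<rfloor> + int i * p)"
    unfolding \<epsilon>_def frac_def by (simp add: algebra_simps)
  have "\<lfloor>real (m + i * r) * \<theta> + \<alpha>\<rfloor> = \<lfloor>frac (real m * \<theta> + \<alpha>) + real i * \<epsilon>\<rfloor> + (\<lfloor>real m * \<theta> + \<alpha>\<rfloor> + int i * p)"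
    unfolding eq by (rule floor_add_int[symmetric])
  then show ?thesis by simp
qed

lemma sum_tail_if:
  fixes g :: "nat \<Rightarrow> int"
  shows "(\<Sum>i=0..n0. (if j \<le> i then g i else 0)) = (\<Sum>i=j..n0. g i)"
proof -
  have "(\<Sum>i=0..n0. (if j \<le> i then g i else 0)) = (\<Sum>i=0..n0. (if i \<in> {j..} then g i else 0))"
    by simp
  also have "\<dots> = sum g ({0..n0} \<inter> {j..})" by (rule sum.inter_restrict[symmetric]) simp
  also have "{0..n0} \<inter> {j..} = {j..n0}" by auto
  finally show ?thesis .
qed

lemma repr_int:
  fixes f :: "int poly" and x p s :: int
  assumes deg: "degree f < n0" and e: "\<forall>i\<le>n0. e i = (if j \<le> i then s else 0)"
  shows "(\<Sum>i=0..n0. bb n0 i * poly f (x + int i * p + e i))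
         = (\<Sum>i=j..n0. bb n0 i * poly (pcompose f [:s,1:] - f) (x + int i * p))"
proof -
  have "(\<Sum>i=0..n0. bb n0 i * poly f (x + int i * p + e i))
     = (\<Sum>i=0..n0. bb n0 i * poly f (x + int i * p)) + (\<Sum>i=0..n0. bb n0 i * (poly f (x + int i * p + e i) - poly f (x + int i * p)))"
    by (simp add: sum.distrib[symmetric] algebra_simps)
  also have "(\<Sum>i=0..n0. bb n0 i * poly f (x + int i * p)) = 0" using vanish2 deg by blast
  also have "(\<Sum>i=0..n0. bb n0 i * (poly f (x + int i * p + e i) - poly f (x + int i * p)))
     = (\<Sum>i=0..n0. (if j \<le> i then bb n0 i * poly (pcompose f [:s,1:] - f) (x + int i * p) else 0))"
    using e by (intro sum.cong) (auto simp: poly_pcompose algebra_simps)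
  also have "\<dots> = (\<Sum>i=j..n0. bb n0 i * poly (pcompose f [:s,1:] - f) (x + int i * p))"
    by (rule sum_tail_if)
  finally show ?thesis by simp
qed

lemma repr_real:
  "real_of_int (\<Sum>i=j..n0. bb n0 i * poly F (x + int i * p)) = WW (bb n0) n0 F j (of_int x) (of_int p)"
  unfolding WW_def by (simp add: PF_poly)

lemma Fs_nz:
  fixes f :: "int poly" and s :: int
  assumes "degree f > 0" "s \<noteq> 0"
  shows "pcompose f [:s,1:] - f \<noteq> 0"
proof
  assume h: "pcompose f [:s,1:] - f = 0"
  have sh: "poly f (s + z) = poly f z" for z
    using arg_cong[OF h, of "\<lambda>q. poly q z"] by (simp add: poly_pcompose)
  have k: "poly f (int k * s) = poly f 0" for k :: nat
  proof (induction k)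
    case 0 then show ?case by simp
  next
    case (Suc k)
    have "poly f (int (Suc k) * s) = poly f (s + int k * s)" by (simp add: algebra_simps)
    then show ?case using sh Suc.IH by simp
  qed
  let ?g = "f - [:poly f 0:]"
  have g: "?g \<noteq> 0"
  proof
    assume "?g = 0"
    then have "f = [:poly f 0:]" by simp
    then have "degree f = 0" by (metis degree_pCons_0)
    then show False using assms by simp
  qed
  have "range (\<lambda>k::nat. int k * s) \<subseteq> {z. poly ?g z = 0}" using k by auto
  moreover have "infinite (range (\<lambda>k::nat. int k * s))"
    using assms(2) by (intro range_inj_infinite) (auto simp: inj_def)
  ultimately have "infinite {z. poly ?g z = 0}" using finite_subset by blast
  then show False using poly_roots_finite[OF g] by simp
qed

lemma density:
  fixes \<theta> \<alpha> lo hi :: real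
  assumes irr: "\<theta> \<notin> \<rat>" and lh: "0 \<le> lo" "lo < hi" "hi \<le> 1"
  shows "\<exists>m\<ge>N. lo < frac (real m * \<theta> + \<alpha>) \<and> frac (real m * \<theta> + \<alpha>) < hi"
proof -
  define \<gamma> where "\<gamma> = (lo + hi) / 2"
  define \<eta> where "\<eta> = (hi - lo) / 2"
  define \<beta> where "\<beta> = frac (\<gamma> - real N * \<theta> - \<alpha>)"
  have \<eta>: "\<eta> > 0" unfolding \<eta>_def using lh by simp
  have \<beta>: "0 \<le> \<beta>" "\<beta> \<le> 1" unfolding \<beta>_def by (auto simp: frac_ge_0 less_imp_le[OF frac_lt_1])
  obtain k where k: "k > 0" "\<bar>frac (real k * \<theta>) - \<beta>\<bar> < \<eta>"
    using Kronecker_approx_1_explicit[OF irr \<beta> \<eta>] by blast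
  define z where "z = \<lfloor>real k * \<theta>\<rfloor> - \<lfloor>\<gamma> - real N * \<theta> - \<alpha>\<rfloor>"
  define y where "y = \<gamma> + (frac (real k * \<theta>) - \<beta>)"
  have eq: "real (N + k) * \<theta> + \<alpha> = of_int z + y"
    unfolding z_def y_def \<beta>_def frac_def by (simp add: algebra_simps)
  have yy: "- \<eta> < frac (real k * \<theta>) - \<beta>" "frac (real k * \<theta>) - \<beta> < \<eta>" using k(2) by (auto simp: abs_less_iff)
  from yy have y1: "lo < y" unfolding y_def \<gamma>_def \<eta>_def by (simp add: field_simps)
  from yy have y2: "y < hi" unfolding y_def \<gamma>_def \<eta>_def by (simp add: field_simps)
  note y = y1 y2
  have y01: "0 \<le> y" "y < 1" using y lh by linarith+
  have fl: "\<lfloor>real (N + k) * \<theta> + \<alpha>\<rfloor> = z" unfolding eq using y01 by (intro floor_unique) auto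
  have "frac (real (N + k) * \<theta> + \<alpha>) = y" unfolding frac_def fl unfolding eq by simp
  moreover have "N + k \<ge> N" by simp
  ultimately show ?thesis using y by blast
qed



lemma wseq_floor:
  fixes \<theta> \<alpha> :: real and rr :: "nat \<Rightarrow> nat" and n :: nat
  defines "p \<equiv> round (real (rr n) * \<theta>)"
  defines "\<epsilon> \<equiv> real (rr n) * \<theta> - of_int p"
  shows "wseq (\<lambda>m. poly f \<lfloor>real m * \<theta> + \<alpha>\<rfloor>) n0 b rr n m
     = (\<Sum>i=0..n0. b i * poly f (\<lfloor>real m * \<theta> + \<alpha>\<rfloor> + int i * p + \<lfloor>frac (real m * \<theta> + \<alpha>) + real i * \<epsilon>\<rfloor>))"
  unfolding wseq_def floor_shift p_def \<epsilon>_def by (rule refl)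

lemma w_zero:
  fixes \<theta> \<alpha> :: real and rr :: "nat \<Rightarrow> nat" and n :: nat
  defines "p \<equiv> round (real (rr n) * \<theta>)"
  defines "\<epsilon> \<equiv> real (rr n) * \<theta> - of_int p"
  assumes deg: "degree f < n0" and z: "\<lfloor>frac (real m * \<theta> + \<alpha>) + real n0 * \<epsilon>\<rfloor> = 0"
  shows "wseq (\<lambda>m. poly f \<lfloor>real m * \<theta> + \<alpha>\<rfloor>) n0 (bb n0) rr n m = 0"
proof -
  have "\<forall>i\<le>n0. \<lfloor>frac (real m * \<theta> + \<alpha>) + real i * \<epsilon>\<rfloor> = 0"
    using pattern0[OF frac_ge_0 frac_lt_1 z] by blast
  then have "wseq (\<lambda>m. poly f \<lfloor>real m * \<theta> + \<alpha>\<rfloor>) n0 (bb n0) rr n m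
     = (\<Sum>i=0..n0. bb n0 i * poly f (\<lfloor>real m * \<theta> + \<alpha>\<rfloor> + int i * p))"
    unfolding wseq_floor p_def[symmetric] \<epsilon>_def[symmetric] by (intro sum.cong) auto
  also have "\<dots> = 0" using vanish2 deg by blast
  finally show ?thesis .
qed

lemma w_repr:
  fixes \<theta> \<alpha> :: real and rr :: "nat \<Rightarrow> nat" and n :: nat
  defines "p \<equiv> round (real (rr n) * \<theta>)"
  defines "\<epsilon> \<equiv> real (rr n) * \<theta> - of_int p"
  assumes deg: "degree f < n0" and e: "\<epsilon> \<noteq> 0" "real n0 * \<bar>\<epsilon>\<bar> < 1"
    and nz: "\<lfloor>frac (real m * \<theta> + \<alpha>) + real n0 * \<epsilon>\<rfloor> \<noteq> 0"
  shows "\<exists>j\<in>{1..n0}. (\<forall>i\<le>n0. \<lfloor>frac (real m * \<theta> + \<alpha>) + real i * \<epsilon>\<rfloor> = (if j \<le> i then (if \<epsilon> > 0 then 1 else -1) else 0))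
     \<and> real_of_int (wseq (\<lambda>m. poly f \<lfloor>real m * \<theta> + \<alpha>\<rfloor>) n0 (bb n0) rr n m)
        = WW (bb n0) n0 (pcompose f [:(if \<epsilon> > 0 then 1 else -1), 1:] - f) j (of_int \<lfloor>real m * \<theta> + \<alpha>\<rfloor>) (of_int p)"
proof -
  obtain j where j: "j \<in> {1..n0}"
    and pat: "\<forall>i\<le>n0. \<lfloor>frac (real m * \<theta> + \<alpha>) + real i * \<epsilon>\<rfloor> = (if j \<le> i then (if \<epsilon> > 0 then 1 else -1) else 0)"
    using pattern[OF frac_ge_0 frac_lt_1 e nz] by blast
  let ?s = "(if \<epsilon> > 0 then 1 else -1) :: int"
  have "wseq (\<lambda>m. poly f \<lfloor>real m * \<theta> + \<alpha>\<rfloor>) n0 (bb n0) rr n m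
     = (\<Sum>i=0..n0. bb n0 i * poly f (\<lfloor>real m * \<theta> + \<alpha>\<rfloor> + int i * p + \<lfloor>frac (real m * \<theta> + \<alpha>) + real i * \<epsilon>\<rfloor>))"
    unfolding wseq_floor p_def \<epsilon>_def ..
  also have "\<dots> = (\<Sum>i=j..n0. bb n0 i * poly (pcompose f [:?s,1:] - f) (\<lfloor>real m * \<theta> + \<alpha>\<rfloor> + int i * p))"
    by (rule repr_int[OF deg]) (use pat in auto)
  finally have eqw: "wseq (\<lambda>m. poly f \<lfloor>real m * \<theta> + \<alpha>\<rfloor>) n0 (bb n0) rr n m
     = (\<Sum>i=j..n0. bb n0 i * poly (pcompose f [:?s,1:] - f) (\<lfloor>real m * \<theta> + \<alpha>\<rfloor> + int i * p))" .
  have "real_of_int (wseq (\<lambda>m. poly f \<lfloor>real m * \<theta> + \<alpha>\<rfloor>) n0 (bb n0) rr n m)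
     = WW (bb n0) n0 (pcompose f [:?s,1:] - f) j (of_int \<lfloor>real m * \<theta> + \<alpha>\<rfloor>) (of_int p)"
    unfolding eqw by (rule repr_real)
  then show ?thesis using j pat by blast
qed



theorem mainTheorem2:
  fixes \<theta> \<alpha> :: real and f :: "int poly"
  assumes "0 < \<theta>" "\<theta> < 1" "\<theta> \<notin> \<rat>"
    and "0 < \<alpha>" "\<alpha> < 1"
    and "degree f > 0"
  shows "condition_star (\<lambda>m. poly f \<lfloor>real m * \<theta> + \<alpha>\<rfloor>)"
proof -
  note th0 = assms(1) and th1 = assms(2) and irr = assms(3) and al0 = assms(4) and al1 = assms(5) and degf = assms(6)
  define u where "u = (\<lambda>m. poly f \<lfloor>real m * \<theta> + \<alpha>\<rfloor>)"
  define d where "d = degree f"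
  define n0 where "n0 = Suc d"
  define K where "K = n0"
  have K1: "K \<ge> 1" unfolding K_def n0_def by simp
  have deg: "degree f < n0" unfolding n0_def d_def by simp
  have beta: "\<forall>j\<in>{1..n0}. (\<Sum>i=j..n0. bb n0 i) \<noteq> 0"
  proof
    fix j assume j: "j \<in> {1..n0}"
    then obtain j' where j': "j = Suc j'" "j' \<le> d" unfolding n0_def by (cases j) auto
    show "(\<Sum>i=j..n0. bb n0 i) \<noteq> 0" unfolding j'(1) n0_def using tail_sum[OF j'(2)] bb_nz[OF j'(2)] by simp
  qed
  define FF where "FF = (\<lambda>s::int. pcompose f [:s,1:] - f)"
  have FFnz: "FF s \<noteq> 0" if "s \<noteq> 0" for s unfolding FF_def using Fs_nz degf that by blast
  define E where "E = real K + 2"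
  have E0: "0 \<le> E" unfolding E_def by simp
  obtain Cp where Cp: "Cp > 0" "\<forall>j\<in>{1..n0}. \<forall>j'\<in>{1..n0}. \<forall>x x' p D. 0 \<le> x \<longrightarrow> x \<le> x' \<longrightarrow> x' \<le> x + E*D \<longrightarrow>
           0 \<le> p \<longrightarrow> p \<le> E*D \<longrightarrow> 1 \<le> D \<longrightarrow>
           \<bar>WW (bb n0) n0 (FF 1) j' x' p\<bar> \<le> Cp * (D^degree (FF 1) + \<bar>WW (bb n0) n0 (FF 1) j x p\<bar>)"
    using KEY[OF FFnz[of 1] beta E0] by auto
  obtain Cm where Cm: "Cm > 0" "\<forall>j\<in>{1..n0}. \<forall>j'\<in>{1..n0}. \<forall>x x' p D. 0 \<le> x \<longrightarrow> x \<le> x' \<longrightarrow> x' \<le> x + E*D \<longrightarrow>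
           0 \<le> p \<longrightarrow> p \<le> E*D \<longrightarrow> 1 \<le> D \<longrightarrow>
           \<bar>WW (bb n0) n0 (FF (-1)) j' x' p\<bar> \<le> Cm * (D^degree (FF (-1)) + \<bar>WW (bb n0) n0 (FF (-1)) j x p\<bar>)"
    using KEY[OF FFnz[of "-1"] beta E0] by auto
  have "\<forall>n. \<exists>r::nat. r > n \<and> real K * nd (real r * \<theta>) < 1 \<and>
     (\<forall>k::nat. 1 \<le> k \<longrightarrow> k * (K+1) < r \<longrightarrow> real K * nd (real r * \<theta>) \<le> nd (real k * \<theta>))"
    using select[OF irr K1] by blast
  then obtain rr where rr: "\<And>n. rr n > n" "\<And>n. real K * nd (real (rr n) * \<theta>) < 1"
    "\<And>n k. 1 \<le> k \<Longrightarrow> k * (K+1) < rr n \<Longrightarrow> real K * nd (real (rr n) * \<theta>) \<le> nd (real k * \<theta>)"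
    by metis
  define P where "P = (\<lambda>n. round (real (rr n) * \<theta>))"
  define \<epsilon> where "\<epsilon> = (\<lambda>n. real (rr n) * \<theta> - of_int (P n))"
  define S where "S = (\<lambda>n. if \<epsilon> n > 0 then 1 else (-1::int))"
  define X where "X = (\<lambda>m::nat. \<lfloor>real m * \<theta> + \<alpha>\<rfloor>)"
  define T where "T = (\<lambda>m::nat. frac (real m * \<theta> + \<alpha>))"
  have XT: "of_int (X m) + T m = real m * \<theta> + \<alpha>" for m unfolding X_def T_def frac_def by simp
  have T01: "0 \<le> T m" "T m < 1" for m unfolding T_def by (auto simp: frac_ge_0 frac_lt_1)
  have nd_eps: "nd (real (rr n) * \<theta>) = \<bar>\<epsilon> n\<bar>" for n unfolding nd_def \<epsilon>_def P_def by simp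
  have eps_nz: "\<epsilon> n \<noteq> 0" for n
  proof -
    have "rr n \<ge> 1" using rr(1)[of n] by simp
    then have "nd (real (rr n) * \<theta>) > 0" using nd_pos irr by blast
    then show ?thesis using nd_eps by simp
  qed
  have eps_small: "real n0 * \<bar>\<epsilon> n\<bar> < 1" for n using rr(2)[of n] nd_eps unfolding K_def by simp
  have P0: "0 \<le> P n" for n
  proof -
    have "0 \<le> real (rr n) * \<theta>" using th0 by simp
    then show ?thesis unfolding P_def by (simp add: round_def)
  qed
  have Pbound: "real_of_int (P n) \<le> real (rr n) + 1" for n
  proof -
    have "real_of_int (P n) \<le> real (rr n) * \<theta> + 1/2" unfolding P_def using of_int_round_le[of "real (rr n) * \<theta>"] by simp
    also have "\<dots> \<le> real (rr n) + 1" using mult_left_le[of \<theta> "real (rr n)"] th1 by simp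
    finally show ?thesis .
  qed
  have X0: "0 \<le> X m" for m unfolding X_def using th0 al0 by simp
  have FFS: "FF (S n) \<noteq> 0" for n unfolding S_def using FFnz by simp
  have wz: "\<lfloor>T m + real n0 * \<epsilon> n\<rfloor> = 0 \<Longrightarrow> wseq u n0 (bb n0) rr n m = 0" for n m
    unfolding u_def T_def \<epsilon>_def P_def by (rule w_zero[OF deg])
  have wr: "\<lfloor>T m + real n0 * \<epsilon> n\<rfloor> \<noteq> 0 \<Longrightarrow> \<exists>j\<in>{1..n0}. (\<forall>i\<le>n0. \<lfloor>T m + real i * \<epsilon> n\<rfloor> = (if j \<le> i then S n else 0))
     \<and> real_of_int (wseq u n0 (bb n0) rr n m) = WW (bb n0) n0 (FF (S n)) j (of_int (X m)) (of_int (P n))" for n m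
    using w_repr[where rr=rr and n=n and \<theta>=\<theta> and \<alpha>=\<alpha> and m=m and f=f and n0=n0, OF deg eps_nz[of n, unfolded \<epsilon>_def P_def] eps_small[of n, unfolded \<epsilon>_def P_def]]
    unfolding u_def T_def \<epsilon>_def P_def S_def FF_def X_def by simp
  have inD: "\<lfloor>T m + real n0 * \<epsilon> n\<rfloor> \<noteq> 0" if "m \<in> Delta u n0 (bb n0) rr n" for n m
    using that wz unfolding Delta_def by auto
  have gap: "rr n \<le> (m' - m) * (K+1)" if m: "m \<in> Delta u n0 (bb n0) rr n" and m': "m' \<in> Delta u n0 (bb n0) rr n"
    and mm: "m < m'" for n m m'
  proof -
    have a: "\<not> (0 \<le> T m + real n0 * \<epsilon> n \<and> T m + real n0 * \<epsilon> n < 1)"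
      using inD[OF m] floor_eq_iff[of "T m + real n0 * \<epsilon> n" 0] by simp
    have b: "\<not> (0 \<le> T m' + real n0 * \<epsilon> n \<and> T m' + real n0 * \<epsilon> n < 1)"
      using inD[OF m'] floor_eq_iff[of "T m' + real n0 * \<epsilon> n" 0] by simp
    have ne: "0 \<le> real n0 * \<epsilon> n \<longleftrightarrow> 0 < \<epsilon> n" using eps_nz[of n] unfolding n0_def
      by (simp add: zero_le_mult_iff less_le)
    have diff: "\<bar>T m' - T m\<bar> < real n0 * \<bar>\<epsilon> n\<bar>"
    proof (cases "\<epsilon> n > 0")
      case True
      then have "real n0 * \<bar>\<epsilon> n\<bar> = real n0 * \<epsilon> n" by simp
      moreover have "0 \<le> real n0 * \<epsilon> n" using True by simp
      ultimately show ?thesis using a b T01[of m] T01[of m'] by linarith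
    next
      case False
      then have "\<epsilon> n < 0" using eps_nz[of n] by simp
      then have "real n0 * \<bar>\<epsilon> n\<bar> = - (real n0 * \<epsilon> n)" "real n0 * \<epsilon> n \<le> 0"
        by (simp_all add: mult_nonneg_nonpos)
      then show ?thesis using a b T01[of m] T01[of m'] by linarith
    qed
    define k where "k = m' - m"
    have k1: "1 \<le> k" unfolding k_def using mm by simp
    have "real k * \<theta> - of_int (X m' - X m) = T m' - T m"
      using XT[of m] XT[of m'] mm unfolding k_def by (simp add: of_nat_diff algebra_simps)
    then have "nd (real k * \<theta>) \<le> \<bar>T m' - T m\<bar>" using nd_le[of "real k * \<theta>" "X m' - X m"] by simp
    also have "\<dots> < real K * nd (real (rr n) * \<theta>)" using diff nd_eps unfolding K_def by simp
    finally have "\<not> k * (K+1) < rr n" using rr(3)[OF k1, of n] by linarith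
    then show ?thesis unfolding k_def by simp
  qed
  show ?thesis
    unfolding condition_star_def u_def[symmetric]
  proof (intro exI[of _ n0] exI[of _ "bb n0"] exI[of _ rr] conjI allI)
    show "0 < rr n" for n using rr(1)[of n] by simp
  next
    show "\<not> bdd_above (range rr)"
    proof
      assume "bdd_above (range rr)"
      then obtain B where "\<And>n. rr n \<le> B" by (auto simp: bdd_above_def)
      then show False using rr(1)[of B] by (metis not_le)
    qed
  next
    fix n
    show "infinite (Delta u n0 (bb n0) rr n)"
      unfolding infinite_nat_iff_unbounded_le
    proof
      fix N
      let ?F = "FF (S n)"
      have "finite {z. poly ?F z = 0}" using poly_roots_finite FFS by blast
      then obtain B where B: "\<And>z. poly ?F z = 0 \<Longrightarrow> z \<le> B"
        using bdd_above_finite[of "{z. poly ?F z = 0}"] by (auto simp: bdd_above_def)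
      define N1 where "N1 = nat \<lceil>(\<bar>of_int B\<bar> + 1) / \<theta>\<rceil>"
      define lo where "lo = (if \<epsilon> n > 0 then 1 - real n0 * \<epsilon> n else real d * (- \<epsilon> n))"
      define hi where "hi = (if \<epsilon> n > 0 then 1 - real d * \<epsilon> n else real n0 * (- \<epsilon> n))"
      have n0d: "real n0 = real d + 1" unfolding n0_def by simp
      have lh: "0 \<le> lo" "lo < hi" "hi \<le> 1"
      proof -
        show "0 \<le> lo" using eps_small[of n] unfolding lo_def by (auto simp: mult_nonneg_nonpos)
        show "lo < hi" using eps_nz[of n] unfolding lo_def hi_def n0d by (auto simp: algebra_simps)
        show "hi \<le> 1" using eps_small[of n] unfolding hi_def by auto
      qed
      obtain m where mN: "m \<ge> max N N1" and Tm: "lo < T m" "T m < hi"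
        using density[OF irr lh, of "max N N1" \<alpha>] unfolding T_def by blast
      have f1: "\<lfloor>T m + real d * \<epsilon> n\<rfloor> = 0"
      proof (cases "\<epsilon> n > 0")
        case True
        have "real n0 * \<epsilon> n < 1" using eps_small[of n] True by simp
        then show ?thesis using Tm True unfolding lo_def hi_def n0d floor_eq_iff by (auto simp: algebra_simps)
      next
        case False
        then have en: "\<epsilon> n < 0" using eps_nz[of n] by simp
        have "real n0 * (- \<epsilon> n) < 1" using eps_small[of n] en by simp
        moreover have "real d * \<epsilon> n \<le> 0" using en by (simp add: mult_nonneg_nonpos)
        ultimately show ?thesis using Tm False en unfolding lo_def hi_def n0d floor_eq_iff by (auto simp: algebra_simps)
      qed
      have f2: "\<lfloor>T m + real n0 * \<epsilon> n\<rfloor> \<noteq> 0"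
      proof (cases "\<epsilon> n > 0")
        case True
        then show ?thesis using Tm unfolding lo_def hi_def floor_eq_iff by auto
      next
        case False
        then show ?thesis using Tm unfolding lo_def hi_def floor_eq_iff by auto
      qed
      obtain j where j: "j \<in> {1..n0}" and pat: "\<forall>i\<le>n0. \<lfloor>T m + real i * \<epsilon> n\<rfloor> = (if j \<le> i then S n else 0)"
        and wm: "real_of_int (wseq u n0 (bb n0) rr n m) = WW (bb n0) n0 ?F j (of_int (X m)) (of_int (P n))"
        using wr[OF f2] by blast
      have "j = n0"
      proof (rule ccontr)
        assume "j \<noteq> n0"
        then have "j \<le> d" using j unfolding n0_def by auto
        then have "\<lfloor>T m + real d * \<epsilon> n\<rfloor> = S n" using pat unfolding n0_def by auto
        then show False using f1 unfolding S_def by (auto split: if_splits)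
      qed
      then have wm2: "real_of_int (wseq u n0 (bb n0) rr n m) = real_of_int (bb n0 n0) * real_of_int (poly ?F (X m + int n0 * P n))"
        using wm unfolding WW_def by (simp add: PF_poly)
      have "real m * \<theta> \<ge> \<bar>of_int B\<bar> + 1"
      proof -
        have "real m \<ge> real N1" using mN by simp
        also have "real N1 \<ge> (\<bar>of_int B\<bar> + 1) / \<theta>" unfolding N1_def by linarith
        finally have "real m \<ge> (\<bar>of_int B\<bar> + 1) / \<theta>" .
        then show ?thesis using th0 by (simp add: divide_le_eq)
      qed
      then have "real_of_int B + 1 \<le> real m * \<theta> + \<alpha>" using al0 by linarith
      then have "B + 1 \<le> X m" unfolding X_def by (simp add: le_floor_iff)
      moreover have "0 \<le> int n0 * P n" using P0[of n] by simp
      ultimately have "\<not> X m + int n0 * P n \<le> B" by linarith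
      then have "poly ?F (X m + int n0 * P n) \<noteq> 0" using B by blast
      moreover have "bb n0 n0 \<noteq> 0" using bb_nz by simp
      moreover have "wseq u n0 (bb n0) rr n m = bb n0 n0 * poly ?F (X m + int n0 * P n)"
        using wm2 by (metis of_int_eq_iff of_int_mult)
      ultimately have "wseq u n0 (bb n0) rr n m \<noteq> 0" by simp
      then show "\<exists>m'\<ge>N. m' \<in> Delta u n0 (bb n0) rr n" using mN unfolding Delta_def by (intro exI[of _ m]) auto
    qed
  next
    show "\<exists>c>0. \<forall>n. \<forall>m\<in>Delta u n0 (bb n0) rr n. \<forall>m'\<in>Delta u n0 (bb n0) rr n.
            m \<noteq> m' \<longrightarrow> \<bar>real m - real m'\<bar> \<ge> c * real (rr n)"
    proof (intro exI[of _ "1 / real (K+1)"] conjI allI ballI impI)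
      show "0 < 1 / real (K+1)" by simp
    next
      fix n m m' assume m: "m \<in> Delta u n0 (bb n0) rr n" and m': "m' \<in> Delta u n0 (bb n0) rr n" and ne: "m \<noteq> m'"
      have key: "1 / real (K+1) * real (rr n) \<le> real b - real a"
        if a: "a \<in> Delta u n0 (bb n0) rr n" and b: "b \<in> Delta u n0 (bb n0) rr n" and ab: "a < b" for a b
      proof -
        have "rr n \<le> (b - a) * (K+1)" using gap[OF a b ab] .
        then have "real (rr n) \<le> real ((b - a) * (K+1))" by (simp only: of_nat_le_iff)
        also have "\<dots> = (real b - real a) * real (K+1)" using ab by (simp only: of_nat_mult of_nat_diff[OF less_imp_le[OF ab]])
        finally have "real (rr n) \<le> (real b - real a) * real (K+1)" .
        then show ?thesis by (simp add: divide_simps mult.commute)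
      qed
      show "1 / real (K+1) * real (rr n) \<le> \<bar>real m - real m'\<bar>"
      proof (cases "m < m'")
        case True then show ?thesis using key[OF m m' True] by simp
      next
        case False then have "m' < m" using ne by simp
        then show ?thesis using key[OF m' m] by simp
      qed
    qed
  next
    define c0 where "c0 = max (degree (FF 1)) (degree (FF (-1)))"
    define C' where "C' = max Cp Cm"
    show "\<exists>c0 C'. 0 \<le> c0 \<and> 0 < C' \<and> (\<forall>n. \<forall>m\<in>Delta u n0 (bb n0) rr n. \<forall>m'\<in>Delta u n0 (bb n0) rr n. m < m' \<longrightarrow>
             real_of_int \<bar>wseq u n0 (bb n0) rr n m'\<bar>
               \<le> C' * (real (m' - m) powr c0 + real_of_int \<bar>wseq u n0 (bb n0) rr n m\<bar>))"
    proof -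
    have C'0: "0 < C'" unfolding C'_def using Cp by simp
    have main: "real_of_int \<bar>wseq u n0 (bb n0) rr n m'\<bar> \<le> C' * (real (m' - m) powr real c0 + real_of_int \<bar>wseq u n0 (bb n0) rr n m\<bar>)"
      if m: "m \<in> Delta u n0 (bb n0) rr n" and m': "m' \<in> Delta u n0 (bb n0) rr n" and mm: "m < m'" for n m m'
    proof -
      obtain j where j: "j \<in> {1..n0}"
        and wm: "real_of_int (wseq u n0 (bb n0) rr n m) = WW (bb n0) n0 (FF (S n)) j (of_int (X m)) (of_int (P n))"
        using wr[OF inD[OF m]] by blast
      obtain j' where j': "j' \<in> {1..n0}"
        and wm': "real_of_int (wseq u n0 (bb n0) rr n m') = WW (bb n0) n0 (FF (S n)) j' (of_int (X m')) (of_int (P n))"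
        using wr[OF inD[OF m']] by blast
      define D where "D = real (m' - m)"
      have D1: "1 \<le> D" unfolding D_def using mm by simp
      have Dm: "D = real m' - real m" unfolding D_def using mm by (simp add: of_nat_diff)
      have c1: "0 \<le> real_of_int (X m)" using X0 by simp
      have c2: "real_of_int (X m) \<le> real_of_int (X m')" unfolding X_def using mm th0
        by (simp add: floor_mono mult_right_mono)
      have c3: "real_of_int (X m') \<le> real_of_int (X m) + E * D"
      proof -
        have "real_of_int (X m') \<le> real m' * \<theta> + \<alpha>" unfolding X_def by simp
        moreover have "real m * \<theta> + \<alpha> < real_of_int (X m) + 1" unfolding X_def by linarith
        moreover have "(real m' - real m) * \<theta> \<le> D" using Dm D1 th1 th0 mm by (simp add: mult_left_le)
        moreover have "E * D \<ge> 2 * D" unfolding E_def using D1 by (intro mult_right_mono) auto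
        ultimately show ?thesis using D1 by (simp only: algebra_simps)
      qed
      have c4: "0 \<le> real_of_int (P n)" using P0 by simp
      have c5: "real_of_int (P n) \<le> E * D"
      proof -
        have "rr n \<le> (m' - m) * (K+1)" using gap[OF m m' mm] .
        then have "real (rr n) \<le> real ((m' - m) * (K+1))" by (simp only: of_nat_le_iff)
        then have "real (rr n) \<le> D * real (K+1)" unfolding D_def by (simp only: of_nat_mult)
        then have "real_of_int (P n) \<le> D * real (K+1) + 1" using Pbound[of n] by linarith
        also have "\<dots> \<le> E * D" unfolding E_def using D1 by (simp add: algebra_simps)
        finally show ?thesis .
      qed
      have pw: "D ^ degree (FF (S n)) \<le> D powr real c0"
      proof -
        have "degree (FF (S n)) \<le> c0" unfolding c0_def S_def by auto
        then have "D powr real (degree (FF (S n))) \<le> D powr real c0" using D1 by (intro powr_mono) auto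
        then show ?thesis using D1 by (simp add: powr_realpow)
      qed
      have bound: "\<bar>WW (bb n0) n0 (FF (S n)) j' (of_int (X m')) (of_int (P n))\<bar>
          \<le> C' * (D ^ degree (FF (S n)) + \<bar>WW (bb n0) n0 (FF (S n)) j (of_int (X m)) (of_int (P n))\<bar>)"
      proof -
        have "\<exists>Cs. Cs \<le> C' \<and> \<bar>WW (bb n0) n0 (FF (S n)) j' (of_int (X m')) (of_int (P n))\<bar>
          \<le> Cs * (D ^ degree (FF (S n)) + \<bar>WW (bb n0) n0 (FF (S n)) j (of_int (X m)) (of_int (P n))\<bar>)"
        proof (cases "\<epsilon> n > 0")
          case True
          then have "S n = 1" unfolding S_def by simp
          then show ?thesis using Cp(2) j j' c1 c2 c3 c4 c5 D1 unfolding C'_def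
            by (intro exI[of _ Cp]) auto
        next
          case False
          then have "S n = -1" unfolding S_def by simp
          then show ?thesis using Cm(2) j j' c1 c2 c3 c4 c5 D1 unfolding C'_def
            by (intro exI[of _ Cm]) auto
        qed
        then obtain Cs where Cs: "Cs \<le> C'" "\<bar>WW (bb n0) n0 (FF (S n)) j' (of_int (X m')) (of_int (P n))\<bar>
          \<le> Cs * (D ^ degree (FF (S n)) + \<bar>WW (bb n0) n0 (FF (S n)) j (of_int (X m)) (of_int (P n))\<bar>)" by blast
        have "0 \<le> D ^ degree (FF (S n)) + \<bar>WW (bb n0) n0 (FF (S n)) j (of_int (X m)) (of_int (P n))\<bar>"
          using D1 by simp
        then show ?thesis using Cs by (meson mult_right_mono order_trans)
      qed
      have "real_of_int \<bar>wseq u n0 (bb n0) rr n m'\<bar> = \<bar>WW (bb n0) n0 (FF (S n)) j' (of_int (X m')) (of_int (P n))\<bar>"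
        using wm' by simp
      also have "\<dots> \<le> C' * (D ^ degree (FF (S n)) + \<bar>WW (bb n0) n0 (FF (S n)) j (of_int (X m)) (of_int (P n))\<bar>)"
        by (rule bound)
      also have "\<dots> \<le> C' * (D powr real c0 + real_of_int \<bar>wseq u n0 (bb n0) rr n m\<bar>)"
        using pw wm Cp unfolding C'_def by (intro mult_left_mono) auto
      finally show "real_of_int \<bar>wseq u n0 (bb n0) rr n m'\<bar> \<le> C' * (real (m' - m) powr real c0 + real_of_int \<bar>wseq u n0 (bb n0) rr n m\<bar>)"
        unfolding D_def .
    qed
    show ?thesis using main C'0 by (intro exI[of _ "real c0"] exI[of _ C']) auto
    qed
  qed
qed


end
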